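(* Let $\sigma^2>0$, $\boldsymbol\beta\in\mathbb{R}^p$ not identically zero, $\delta_1^2,\dots,\delta_p^2>0$, and $\Sigma=\sigma^2\boldsymbol\beta\boldsymbol\beta^\top+\mathrm{diag}(\delta_1^2,\dots,\delta_p^2)$. Let $w$ be the long-only minimum variance portfolio (the minimizer of $w^\top\Sigma w$ subject to $\sum_i w_i=1$, $w_i\ge0$), let $K=\{i:w_i>0\}$, and set $$B_K=\frac{1}{\sigma^2}+\sum_{j\in K}\frac{\beta_j^2}{\delta_j^2},\qquad C_K=\sum_{j\in K}\frac{\beta_j}{\delta_j^2}.$$ Then for every $i\in\{1,\dots,p\}$: $i\in K$ if and only if $B_K>\beta_i C_K$. *)

theory Defs
  imports "HOL-Analysis.Analysis"
begin

definition one_factor_cov :: "real \<Rightarrow> real^'n \<Rightarrow> real^'n \<Rightarrow> real^'n^'n" where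
  "one_factor_cov \<sigma> \<beta> \<delta> =
     (\<chi> i j. \<sigma>\<^sup>2 * (\<beta>$i * \<beta>$j) + (if i = j then (\<delta>$i)\<^sup>2 else 0))"

definition long_only :: "(real^'n::finite) set" where
  "long_only = {w. (\<Sum>i\<in>UNIV. w$i) = 1 \<and> (\<forall>i. 0 \<le> w$i)}"

definition is_lo_mvp :: "real^'n^'n \<Rightarrow> real^'n::finite \<Rightarrow> bool" where
  "is_lo_mvp S w \<longleftrightarrow> w \<in> long_only \<and>
     (\<forall>v\<in>long_only. w \<bullet> (S *v w) \<le> v \<bullet> (S *v v))"

end

theory Submission imports Defs begin
lemma mv: "(one_factor_cov \<sigma> \<beta> \<delta> *v v) $ i = \<sigma>\<^sup>2 * \<beta>$i * (\<Sum>k\<in>UNIV. \<beta>$k * v$k) + (\<delta>$i)\<^sup>2 * v$i"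
proof -
  have "(one_factor_cov \<sigma> \<beta> \<delta> *v v) $ i = (\<Sum>j\<in>UNIV. \<sigma>\<^sup>2 * \<beta>$i * (\<beta>$j * v$j) + (if i = j then (\<delta>$i)\<^sup>2 * v$i else 0))"
    unfolding one_factor_cov_def matrix_vector_mult_def
    by (auto intro!: sum.cong simp: algebra_simps)
  also have "\<dots> = \<sigma>\<^sup>2 * \<beta>$i * (\<Sum>k\<in>UNIV. \<beta>$k * v$k) + (\<delta>$i)\<^sup>2 * v$i"
    by (simp add: sum.distrib sum_distrib_left)
  finally show ?thesis .
qed
lemma quad: "v \<bullet> (one_factor_cov \<sigma> \<beta> \<delta> *v v) = \<sigma>\<^sup>2 * (\<Sum>k\<in>UNIV. \<beta>$k * v$k)\<^sup>2 + (\<Sum>k\<in>UNIV. (\<delta>$k)\<^sup>2 * (v$k)\<^sup>2)"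
  unfolding inner_vec_def mv
  by (simp add: distrib_left sum.distrib sum_distrib_left sum_distrib_right power2_eq_square algebra_simps)
lemma kkt:
  fixes \<sigma> :: real and \<beta> \<delta> w :: "real^'n::finite"
  assumes d: "\<forall>i. (\<delta>$i)\<^sup>2 > 0"
    and m: "is_lo_mvp (one_factor_cov \<sigma> \<beta> \<delta>) w"
    and wi: "0 < w$i"
  shows "\<sigma>\<^sup>2 * \<beta>$i * (\<Sum>k\<in>UNIV. \<beta>$k * w$k) + (\<delta>$i)\<^sup>2 * w$i \<le> \<sigma>\<^sup>2 * \<beta>$j * (\<Sum>k\<in>UNIV. \<beta>$k * w$k) + (\<delta>$j)\<^sup>2 * w$j"
proof (cases "j = i")
  case True then show ?thesis by simp
next
  case ji: False
  define s where "s = (\<Sum>k\<in>UNIV. \<beta>$k * w$k)"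
  define gi where "gi = \<sigma>\<^sup>2 * \<beta>$i * s + (\<delta>$i)\<^sup>2 * w$i"
  define gj where "gj = \<sigma>\<^sup>2 * \<beta>$j * s + (\<delta>$j)\<^sup>2 * w$j"
  define c where "c = \<sigma>\<^sup>2 * (\<beta>$j - \<beta>$i)\<^sup>2 + (\<delta>$j)\<^sup>2 + (\<delta>$i)\<^sup>2"
  have cpos: "c > 0" unfolding c_def using d[rule_format, of i] d[rule_format, of j]
    by (simp add: add_nonneg_pos add_pos_pos)
  show ?thesis unfolding s_def[symmetric] gi_def[symmetric] gj_def[symmetric]
  proof (rule ccontr)
    assume "\<not> gi \<le> gj"
    hence lt: "gj < gi" by simp
    define t where "t = min (w$i) ((gi - gj) / c)"
    have t0: "t > 0" unfolding t_def using wi lt cpos by simp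
    have twi: "t \<le> w$i" unfolding t_def by simp
    have tc: "t * c \<le> gi - gj" unfolding t_def using cpos
      by (metis min.cobounded2 mult_right_mono less_imp_le nonzero_eq_divide_eq order_less_irrefl
           mult.commute pos_le_divide_eq)
    define dd where "dd = (\<lambda>k. (if k = j then 1 else 0) - (if k = i then 1 else (0::real)))"
    define v where "v = (\<chi> k. w$k + t * dd k)"
    have vk: "v$k = w$k + t * dd k" for k unfolding v_def by simp
    have sd: "(\<Sum>k\<in>UNIV. f k * dd k) = f j - f i" for f :: "'n \<Rightarrow> real"
    proof -
      have "f k * dd k = (if k = j then f k else 0) - (if k = i then f k else 0)" for k
        unfolding dd_def by auto
      thus ?thesis by (simp add: sum_subtractf)
    qed
    have sd2: "(\<Sum>k\<in>UNIV. f k * (dd k)\<^sup>2) = f j + f i" for f :: "'n \<Rightarrow> real"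
    proof -
      have "f k * (dd k)\<^sup>2 = (if k = j then f k else 0) + (if k = i then f k else 0)" for k
        unfolding dd_def using ji by auto
      thus ?thesis by (simp add: sum.distrib)
    qed
    have wlo: "w \<in> long_only" and wmin: "\<And>u. u \<in> long_only \<Longrightarrow>
        w \<bullet> (one_factor_cov \<sigma> \<beta> \<delta> *v w) \<le> u \<bullet> (one_factor_cov \<sigma> \<beta> \<delta> *v u)"
      using m unfolding is_lo_mvp_def by auto
    have vlo: "v \<in> long_only"
    proof -
      have "(\<Sum>k\<in>UNIV. v$k) = (\<Sum>k\<in>UNIV. w$k) + t * (\<Sum>k\<in>UNIV. 1 * dd k)"
        unfolding vk by (simp add: sum.distrib sum_distrib_left)
      also have "\<dots> = 1" using wlo sd[of "\<lambda>_. 1"] unfolding long_only_def by simp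
      finally have s1: "(\<Sum>k\<in>UNIV. v$k) = 1" .
      have "0 \<le> v$k" for k
        using wlo t0 twi ji unfolding vk dd_def long_only_def
        by (cases "k = i"; cases "k = j"; auto)
      with s1 show ?thesis unfolding long_only_def by simp
    qed
    have sv: "(\<Sum>k\<in>UNIV. \<beta>$k * v$k) = s + t * (\<beta>$j - \<beta>$i)"
    proof -
      have "(\<Sum>k\<in>UNIV. \<beta>$k * v$k) = s + t * (\<Sum>k\<in>UNIV. \<beta>$k * dd k)"
        unfolding vk s_def by (simp add: distrib_left sum.distrib sum_distrib_left algebra_simps)
      thus ?thesis using sd by simp
    qed
    have qv: "(\<Sum>k\<in>UNIV. (\<delta>$k)\<^sup>2 * (v$k)\<^sup>2) = (\<Sum>k\<in>UNIV. (\<delta>$k)\<^sup>2 * (w$k)\<^sup>2)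
        + 2 * t * (\<Sum>k\<in>UNIV. ((\<delta>$k)\<^sup>2 * w$k) * dd k) + t\<^sup>2 * (\<Sum>k\<in>UNIV. (\<delta>$k)\<^sup>2 * (dd k)\<^sup>2)"
      unfolding vk by (simp add: power2_sum distrib_left sum.distrib sum_distrib_left algebra_simps power_mult_distrib)
    have "w \<bullet> (one_factor_cov \<sigma> \<beta> \<delta> *v w) \<le> v \<bullet> (one_factor_cov \<sigma> \<beta> \<delta> *v v)"
      using wmin vlo .
    hence "\<sigma>\<^sup>2 * s\<^sup>2 + (\<Sum>k\<in>UNIV. (\<delta>$k)\<^sup>2 * (w$k)\<^sup>2) \<le>
      \<sigma>\<^sup>2 * (s + t * (\<beta>$j - \<beta>$i))\<^sup>2 + ((\<Sum>k\<in>UNIV. (\<delta>$k)\<^sup>2 * (w$k)\<^sup>2)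
        + 2 * t * ((\<delta>$j)\<^sup>2 * w$j - (\<delta>$i)\<^sup>2 * w$i) + t\<^sup>2 * ((\<delta>$j)\<^sup>2 + (\<delta>$i)\<^sup>2))"
      unfolding quad sv qv sd sd2 s_def by simp
    hence "0 \<le> 2 * t * (gj - gi) + t\<^sup>2 * c"
      unfolding gi_def gj_def c_def by (simp add: power2_eq_square algebra_simps)
    moreover have "2 * t * (gj - gi) + t\<^sup>2 * c \<le> t * (gj - gi)"
    proof -
      have "t\<^sup>2 * c = t * (t * c)" by (simp add: power2_eq_square)
      also have "\<dots> \<le> t * (gi - gj)" using tc t0 by (simp add: mult_left_mono)
      finally show ?thesis by (simp add: algebra_simps)
    qed
    moreover have "t * (gj - gi) < 0" using t0 lt by (simp add: mult_pos_neg)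
    ultimately show False by simp
  qed
qed
theorem lemma1:
  fixes \<sigma> :: real and \<beta> \<delta> w :: "real^'n::finite"
  assumes "\<sigma>\<^sup>2 > 0"
    and "\<beta> \<noteq> 0"
    and "\<forall>i. (\<delta>$i)\<^sup>2 > 0"
    and "is_lo_mvp (one_factor_cov \<sigma> \<beta> \<delta>) w"
  shows "\<forall>i. (0 < w$i) \<longleftrightarrow>
     (1 / \<sigma>\<^sup>2 + (\<Sum>j\<in>{k. 0 < w$k}. (\<beta>$j)\<^sup>2 / (\<delta>$j)\<^sup>2))
       > \<beta>$i * (\<Sum>j\<in>{k. 0 < w$k}. \<beta>$j / (\<delta>$j)\<^sup>2)"
proof -
  note sig = assms(1) and d = assms(3) and m = assms(4)
  define s where "s = (\<Sum>k\<in>UNIV. \<beta>$k * w$k)"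
  define g where "g k = \<sigma>\<^sup>2 * \<beta>$k * s + (\<delta>$k)\<^sup>2 * w$k" for k
  define K where "K = {k. 0 < w$k}"
  define B where "B = 1 / \<sigma>\<^sup>2 + (\<Sum>j\<in>K. (\<beta>$j)\<^sup>2 / (\<delta>$j)\<^sup>2)"
  define B' where "B' = (\<Sum>j\<in>K. (\<beta>$j)\<^sup>2 / (\<delta>$j)\<^sup>2)"
  define C where "C = (\<Sum>j\<in>K. \<beta>$j / (\<delta>$j)\<^sup>2)"
  have kk: "0 < w$i \<Longrightarrow> g i \<le> g j" for i j
    using kkt[OF d m, of i j] unfolding g_def s_def by simp
  have wlo: "w \<in> long_only" using m unfolding is_lo_mvp_def by simp
  hence wnn: "\<And>k. 0 \<le> w$k" and wsum: "(\<Sum>k\<in>UNIV. w$k) = 1" unfolding long_only_def by auto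
  have "\<exists>i. 0 < w$i"
  proof (rule ccontr)
    assume "\<not> (\<exists>i. 0 < w$i)"
    hence "\<forall>k. w$k = 0" using wnn by (metis not_less order_antisym)
    with wsum show False by simp
  qed
  then obtain i0 where i0: "0 < w$i0" by blast
  define l where "l = g i0"
  have gK: "0 < w$k \<Longrightarrow> g k = l" for k using kk[of k i0] kk[OF i0, of k] unfolding l_def by simp
  have gall: "l \<le> g j" for j using kk[OF i0] unfolding l_def by simp
  have wg: "w$k * g k = w$k * l" for k using gK[of k] wnn[of k] by (cases "w$k = 0") auto
  have "(\<Sum>k\<in>UNIV. w$k * g k) = l" using wsum by (simp add: wg sum_distrib_right[symmetric])
  moreover have "(\<Sum>k\<in>UNIV. w$k * g k) = \<sigma>\<^sup>2 * s * s + (\<Sum>k\<in>UNIV. (\<delta>$k)\<^sup>2 * (w$k)\<^sup>2)"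
    unfolding g_def s_def by (simp add: distrib_left sum.distrib sum_distrib_left sum_distrib_right power2_eq_square algebra_simps)
  moreover have "(\<Sum>k\<in>UNIV. (\<delta>$k)\<^sup>2 * (w$k)\<^sup>2) > 0"
    by (rule sum_pos2[of UNIV i0]) (use i0 d in auto)
  moreover have "\<sigma>\<^sup>2 * s * s \<ge> 0" by (simp add: mult.assoc)
  ultimately have lpos: "l > 0" by linarith
  have wK: "k \<in> K \<Longrightarrow> w$k = (l - \<sigma>\<^sup>2 * \<beta>$k * s) / (\<delta>$k)\<^sup>2" for k
    using gK[of k] d[rule_format, of k] unfolding K_def g_def by (simp add: field_simps)
  have "s = (\<Sum>k\<in>K. \<beta>$k * w$k)" unfolding s_def
    by (rule sum.mono_neutral_right) (use wnn in \<open>auto simp: K_def less_eq_real_def\<close>)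
  also have "\<dots> = (\<Sum>k\<in>K. l * (\<beta>$k / (\<delta>$k)\<^sup>2) - \<sigma>\<^sup>2 * s * ((\<beta>$k)\<^sup>2 / (\<delta>$k)\<^sup>2))"
    by (rule sum.cong) (simp_all add: wK right_diff_distrib diff_divide_distrib power2_eq_square mult_ac)
  also have "\<dots> = l * C - \<sigma>\<^sup>2 * s * B'"
    unfolding C_def B'_def by (simp add: sum_subtractf sum_distrib_left)
  finally have seq: "s = l * C - \<sigma>\<^sup>2 * s * B'" .
  have BB: "B = 1 / \<sigma>\<^sup>2 + B'" unfolding B_def B'_def by simp
  have "\<sigma>\<^sup>2 * s * B = s + \<sigma>\<^sup>2 * s * B'" unfolding BB using sig by (simp add: distrib_left)
  hence sB: "\<sigma>\<^sup>2 * s * B = l * C" using seq by linarith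
  have B'nn: "B' \<ge> 0" unfolding B'_def by (rule sum_nonneg) simp
  have Bpos: "B > 0" unfolding BB by (rule add_pos_nonneg[OF _ B'nn]) (use sig in \<open>simp only: zero_less_divide_1_iff\<close>)
  show ?thesis unfolding B_def[symmetric] C_def[symmetric] K_def[symmetric]
  proof (intro allI iffI)
    fix i assume wi: "0 < w$i"
    have "l - \<sigma>\<^sup>2 * \<beta>$i * s = (\<delta>$i)\<^sup>2 * w$i" using gK[OF wi] unfolding g_def by simp
    also have "\<dots> > 0" using wi d by simp
    finally have a: "l - \<sigma>\<^sup>2 * \<beta>$i * s > 0" .
    have "l * (B - \<beta>$i * C) = B * (l - \<sigma>\<^sup>2 * \<beta>$i * s)" using sB by (simp add: algebra_simps)
    also have "\<dots> > 0" using Bpos a by simp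
    finally show "\<beta>$i * C < B" using lpos by (simp add: zero_less_mult_iff)
  next
    fix i assume h: "\<beta>$i * C < B"
    show "0 < w$i"
    proof (rule ccontr)
      assume "\<not> 0 < w$i"
      hence w0: "w$i = 0" using wnn[of i] by simp
      have a: "\<sigma>\<^sup>2 * \<beta>$i * s - l \<ge> 0" using gall[of i] unfolding g_def w0 by simp
      have "l * (\<beta>$i * C - B) = B * (\<sigma>\<^sup>2 * \<beta>$i * s - l)" using sB by (simp add: algebra_simps)
      also have "\<dots> \<ge> 0" using Bpos a by simp
      finally have "\<beta>$i * C - B \<ge> 0" using lpos by (simp add: zero_le_mult_iff)
      with h show False by simp
    qed
  qed
qed
end
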